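(* Let $\alpha>0$, $u=\mathbf{1}_{[-\alpha,\alpha]}$, $\sigma>0$ with $\sigma^2\le\alpha^2/24$, and $$\mathcal{C}(\mathbf{x}) = \Big\langle\nabla_{\mathbf{x}}[\varphi^{(2)}_{\sigma^2}\ast uu^*](\mathbf{x}),\ \begin{bmatrix}0&-1\\1&0\end{bmatrix}\mathbf{x}\Big\rangle_{\ell^2}.$$ Then $\mathcal{C}(s,t)\ge0$ for every $\mathbf{x}=(s,t)$ with $0\le t\le s$.
   Context: $uu^*(s,t)=u(s)u(t)$; $\varphi^{(2)}_{\sigma^2}(\mathbf{x}) = (2\pi\sigma^2)^{-1}e^{-\|\mathbf{x}\|_2^2/(2\sigma^2)}$ and $\ast$ is convolution on $\mathbb{R}^2$. *)

theory Defs
  imports "HOL-Analysis.Analysis"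
begin

text \<open>Points of the plane are modelled as pairs (s,t) :: real \<times> real, whose inner
  product and norm are the Euclidean (l2) ones.\<close>

definition box_ind :: "real \<Rightarrow> real \<Rightarrow> real" where
  "box_ind \<alpha> s = indicator {-\<alpha>..\<alpha>} s"

text \<open>u u^* (s,t) = u(s) u(t).\<close>
definition tensor_sq :: "(real \<Rightarrow> real) \<Rightarrow> real \<times> real \<Rightarrow> real" where
  "tensor_sq u x = u (fst x) * u (snd x)"

definition gauss2 :: "real \<Rightarrow> real \<times> real \<Rightarrow> real" where
  "gauss2 v x = exp (- ((norm x) ^ 2) / (2 * v)) / (2 * pi * v)"

definition conv2 :: "(real \<times> real \<Rightarrow> real) \<Rightarrow> (real \<times> real \<Rightarrow> real) \<Rightarrow> real \<times> real \<Rightarrow> real" where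
  "conv2 f g x = integral UNIV (\<lambda>y. f (x - y) * g y)"

definition grad :: "(real \<times> real \<Rightarrow> real) \<Rightarrow> real \<times> real \<Rightarrow> real \<times> real" where
  "grad F x = (SOME g. (F has_derivative (\<lambda>h. g \<bullet> h)) (at x))"

text \<open>Rotation by 90 degrees: [[0,-1],[1,0]] (s,t) = (-t, s).\<close>
definition rot90 :: "real \<times> real \<Rightarrow> real \<times> real" where
  "rot90 x = (- snd x, fst x)"

definition Cfun :: "real \<Rightarrow> real \<Rightarrow> real \<times> real \<Rightarrow> real" where
  "Cfun \<alpha> \<sigma> x = grad (conv2 (gauss2 (\<sigma>^2)) (tensor_sq (box_ind \<alpha>))) x \<bullet> rot90 x"

end

theory Submission imports Defs begin

lemma hypA: "0 \<le> (x::real) \<Longrightarrow> x \<le> sinh x * cosh x"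
proof -
  assume "0 \<le> x"
  then have "2 * x \<le> (exp (2 * x) - inverse(exp (2 * x))) / 2" by (intro real_le_x_sinh) simp
  also have "\<dots> = sinh (2 * x)" by (simp add: sinh_def exp_minus)
  also have "\<dots> = 2 * sinh x * cosh x" by (rule sinh_double)
  finally show ?thesis by simp
qed

lemma hypB:
  fixes x y :: real assumes "0 < x" "x \<le> y"
  shows "x * cosh x * sinh y \<le> y * cosh y * sinh x"
proof -
  let ?k = "\<lambda>z::real. z * cosh z / sinh z"
  have "?k x \<le> ?k y"
  proof (rule DERIV_nonneg_imp_nondecreasing[OF assms(2)])
    fix z assume z: "x \<le> z" "z \<le> y"
    then have zp: "z > 0" using assms by simp
    then have sz: "sinh z > 0" by simp
    have "DERIV ?k z :> ((cosh z + z * sinh z) * sinh z - z * cosh z * cosh z) / (sinh z)^2"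
      using sz by (auto intro!: derivative_eq_intros simp: power2_eq_square)
    moreover have "((cosh z + z * sinh z) * sinh z - z * cosh z * cosh z) / (sinh z)^2 \<ge> 0"
    proof -
      have "(cosh z + z * sinh z) * sinh z - z * cosh z * cosh z = sinh z * cosh z - z * (cosh z ^2 - sinh z ^2)"
        by (simp add: algebra_simps power2_eq_square)
      also have "\<dots> = sinh z * cosh z - z" by (simp add: hyperbolic_pythagoras)
      finally show ?thesis using hypA[of z] zp by simp
    qed
    ultimately show "\<exists>d. DERIV ?k z :> d \<and> d \<ge> 0" by blast
  qed
  moreover have "sinh x > 0" "sinh y > 0" using assms by auto
  ultimately show ?thesis by (simp add: field_simps)
qed

lemma hypC:
  fixes a b s t :: real assumes "0 < t" "t \<le> s" "0 < b" "b \<le> a"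
  shows "sinh (b * s) * sinh (a * t) \<le> sinh (a * s) * sinh (b * t)"
proof -
  let ?r = "\<lambda>c::real. sinh (c * s) / sinh (c * t)"
  have "?r b \<le> ?r a"
  proof (rule DERIV_nonneg_imp_nondecreasing[OF assms(4)])
    fix c assume c: "b \<le> c" "c \<le> a"
    then have cp: "c > 0" using assms by simp
    have st: "sinh (c * t) > 0" "sinh (c * s) > 0" using cp assms by auto
    have "DERIV ?r c :> (s * cosh (c * s) * sinh (c * t) - t * cosh (c * t) * sinh (c * s)) / (sinh (c * t))^2"
      using st by (auto intro!: derivative_eq_intros simp: power2_eq_square algebra_simps)
    moreover have "(c * t) * cosh (c * t) * sinh (c * s) \<le> (c * s) * cosh (c * s) * sinh (c * t)"
      using hypB[of "c * t" "c * s"] cp assms by (simp add: mult_left_mono)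
    then have "c * (t * cosh (c * t) * sinh (c * s)) \<le> c * (s * cosh (c * s) * sinh (c * t))"
      by (simp add: algebra_simps)
    then have "t * cosh (c * t) * sinh (c * s) \<le> s * cosh (c * s) * sinh (c * t)"
      using cp by simp
    ultimately show "\<exists>d. DERIV ?r c :> d \<and> d \<ge> 0" by fastforce
  qed
  moreover have "sinh (b * t) > 0" "sinh (a * t) > 0" using assms by auto
  ultimately show ?thesis by (simp add: field_simps)
qed

lemma hypD:
  fixes A B s t :: real assumes "0 \<le> t" "t \<le> s" "\<bar>B\<bar> \<le> A"
  shows "B * (sinh (A * s) * sinh (B * t) - sinh (A * t) * sinh (B * s)) \<ge> 0"
proof (cases "t = 0 \<or> B = 0")
  case True then show ?thesis by auto
next
  case False
  then have tp: "t > 0" using assms by auto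
  have key: "sinh (\<bar>B\<bar> * s) * sinh (A * t) \<le> sinh (A * s) * sinh (\<bar>B\<bar> * t)"
    using hypC[OF tp assms(2), of "\<bar>B\<bar>" A] False assms by auto
  show ?thesis
  proof (cases "B > 0")
    case True then show ?thesis using key by (simp add: mult_ac)
  next
    case F: False
    then have "\<bar>B\<bar> = -B" by simp
    then have "sinh (-B * s) * sinh (A * t) \<le> sinh (A * s) * sinh (-B * t)" using key by simp
    then have "sinh (A * s) * sinh (B * t) - sinh (A * t) * sinh (B * s) \<le> 0" by (simp add: mult_ac)
    then show ?thesis using F by (simp add: mult_nonpos_nonpos)
  qed
qed

definition phi :: "real \<Rightarrow> real \<Rightarrow> real" where
  "phi v z = exp (-(z^2) / (2 * v)) / sqrt (2 * pi * v)"

definition gg :: "real \<Rightarrow> real \<Rightarrow> real \<Rightarrow> real" where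
  "gg a v x = integral {-a..a} (\<lambda>y. phi v (x - y))"

definition DD :: "real \<Rightarrow> real \<Rightarrow> real \<Rightarrow> real" where
  "DD a v x = phi v (x - a) - phi v (x + a)"

definition MM :: "real \<Rightarrow> real \<Rightarrow> real \<Rightarrow> real" where
  "MM a v x = integral {-a..a} (\<lambda>y. y * phi v (x - y))"

lemma phi_alt: "phi v = (\<lambda>z. exp (-(z^2) * inverse (2 * v)) * inverse (sqrt (2 * pi * v)))"
  by (rule ext) (simp only: phi_def divide_inverse)

lemma cont_phi_UNIV: "continuous_on UNIV (phi v)"
  unfolding phi_alt by (intro continuous_intros)

lemma cont_phi [continuous_intros]:
  "continuous_on S f \<Longrightarrow> continuous_on S (\<lambda>x. phi v (f x))"
  by (rule continuous_on_compose2[OF cont_phi_UNIV]) auto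

lemma deriv_phi:
  assumes "v > 0"
  shows "DERIV (phi v) z :> -(z / v) * phi v z"
  unfolding phi_def using assms
  by (auto intro!: derivative_eq_intros simp: field_simps power2_eq_square)

lemma L2:
  assumes "v > 0" "a > 0"
  shows "((\<lambda>y. (x - y) * phi v (x - y)) has_integral v * DD a v x) {-a..a}"
proof -
  have "((\<lambda>y. (x - y) * phi v (x - y)) has_integral (v * phi v (x - a) - v * phi v (x - - a))) {-a..a}"
  proof (rule fundamental_theorem_of_calculus)
    show "-a \<le> a" using assms by simp
    fix y :: real
    have "((\<lambda>y. v * phi v (x - y)) has_real_derivative (x - y) * phi v (x - y)) (at y)"
    proof -
      have d1: "((\<lambda>y. x - y) has_real_derivative -1) (at y)"
        by (auto intro!: derivative_eq_intros)
      have "((\<lambda>y. phi v (x - y)) has_real_derivative (-((x - y) / v) * phi v (x - y)) * -1) (at y)"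
        by (rule DERIV_chain2[OF deriv_phi[OF assms(1)] d1])
      from DERIV_cmult[OF this, of v] show ?thesis using assms(1) by simp
    qed
    then show "((\<lambda>y. v * phi v (x - y)) has_vector_derivative (x - y) * phi v (x - y)) (at y within {-a..a})"
      by (simp add: has_real_derivative_iff_has_vector_derivative has_vector_derivative_at_within)
  qed
  moreover have "v * phi v (x - a) - v * phi v (x - - a) = v * DD a v x"
    by (simp add: DD_def right_diff_distrib)
  ultimately show ?thesis by simp
qed


lemma int_phi: "(\<lambda>y. phi v (x - y)) integrable_on {c..d}"
  by (intro integrable_continuous_interval continuous_intros)

lemma int_yphi: "(\<lambda>y. y * phi v (x - y)) integrable_on {c..d}"
  by (intro integrable_continuous_interval continuous_intros)

lemma L3:
  assumes "v > 0" "a > 0"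
  shows "x * gg a v x = v * DD a v x + MM a v x"
proof -
  have "((\<lambda>y. (x - y) * phi v (x - y) + y * phi v (x - y)) has_integral (v * DD a v x + MM a v x)) {-a..a}"
    unfolding MM_def by (intro has_integral_add L2 assms integrable_integral int_yphi)
  moreover have "(\<lambda>y. (x - y) * phi v (x - y) + y * phi v (x - y)) = (\<lambda>y. x * phi v (x - y))"
    by (rule ext) (simp only: algebra_simps)
  ultimately have "((\<lambda>y. x * phi v (x - y)) has_integral (v * DD a v x + MM a v x)) {-a..a}" by simp
  moreover have "((\<lambda>y. x * phi v (x - y)) has_integral x * gg a v x) {-a..a}"
    unfolding gg_def by (intro has_integral_mult_right integrable_integral int_phi)
  ultimately show ?thesis using has_integral_unique by blast
qed

lemma L4:
  assumes "v > 0" "a > 0"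
  shows "DERIV (gg a v) x :> - DD a v x"
proof -
  have "((\<lambda>x. integral (cbox (-a) a) (\<lambda>y. phi v (x - y))) has_field_derivative
      integral (cbox (-a) a) (\<lambda>y. -((x - y) / v) * phi v (x - y))) (at x within UNIV)"
  proof (rule leibniz_rule_field_derivative[where fx = "\<lambda>x y. -((x - y) / v) * phi v (x - y)"])
    fix x t :: real
    have d1: "((\<lambda>x. x - t) has_real_derivative 1) (at x)"
      by (auto intro!: derivative_eq_intros)
    show "((\<lambda>x. phi v (x - t)) has_field_derivative -((x - t) / v) * phi v (x - t)) (at x within UNIV)"
      using DERIV_chain2[OF deriv_phi[OF assms(1)] d1] by simp
  next
    fix x :: real
    show "(\<lambda>y. phi v (x - y)) integrable_on cbox (-a) a" using int_phi by simp
  next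
    have e: "(\<lambda>(x, t). -((x - t) / v) * phi v (x - t)) = (\<lambda>p. -((fst p - snd p) * inverse v) * phi v (fst p - snd p))"
      by (rule ext) (simp only: split_beta divide_inverse)
    have "continuous_on UNIV (\<lambda>p::real\<times>real. -((fst p - snd p) * inverse v) * phi v (fst p - snd p))"
      by (intro continuous_intros)
    then show "continuous_on (UNIV \<times> cbox (-a) a) (\<lambda>(x, t). -((x - t) / v) * phi v (x - t))"
      unfolding e by (rule continuous_on_subset) simp
  qed auto
  moreover have "integral (cbox (-a) a) (\<lambda>y. -((x - y) / v) * phi v (x - y)) = - DD a v x"
  proof -
    have "((\<lambda>y. (-1 / v) * ((x - y) * phi v (x - y))) has_integral (-1 / v) * (v * DD a v x)) {-a..a}"
      by (intro has_integral_mult_right L2 assms)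
    moreover have "(\<lambda>y. (-1 / v) * ((x - y) * phi v (x - y))) = (\<lambda>y. -((x - y) / v) * phi v (x - y))"
      by (rule ext) (simp add: field_simps)
    ultimately have "((\<lambda>y. -((x - y) / v) * phi v (x - y)) has_integral - DD a v x) {-a..a}"
      using assms(1) by simp
    then show ?thesis unfolding box_real(2) by (rule integral_unique)
  qed
  ultimately show ?thesis unfolding gg_def by simp
qed

lemma gauss_factor:
  assumes "v > 0"
  shows "gauss2 v (z1, z2) = phi v z1 * phi v z2"
proof -
  have n: "(norm (z1, z2))^2 = z1^2 + z2^2"
    by (simp add: norm_Pair)
  have s: "sqrt (2 * pi * v) * sqrt (2 * pi * v) = 2 * pi * v"
    using assms by (simp add: pi_gt_zero less_imp_le)
  have e: "exp (- (z1^2 + z2^2) / (2 * v)) = exp (-(z1^2) / (2 * v)) * exp (-(z2^2) / (2 * v))"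
    by (simp add: exp_add[symmetric] diff_divide_distrib)
  show ?thesis
    unfolding gauss2_def phi_def n e
    by (simp only: s times_divide_times_eq)
qed

lemma L5:
  assumes "v > 0" "a > 0"
  shows "conv2 (gauss2 v) (tensor_sq (box_ind a)) p = gg a v (fst p) * gg a v (snd p)"
proof -
  obtain p1 p2 where p: "p = (p1, p2)" by (cases p)
  let ?h = "\<lambda>y::real\<times>real. phi v (p1 - fst y) * phi v (p2 - snd y)"
  have eq: "(\<lambda>y. gauss2 v (p - y) * tensor_sq (box_ind a) y) =
      (\<lambda>y. if y \<in> cbox (-a, -a) (a, a) then ?h y else 0)"
  proof (rule ext)
    fix y :: "real \<times> real"
    obtain y1 y2 where y: "y = (y1, y2)" by (cases y)
    show "gauss2 v (p - y) * tensor_sq (box_ind a) y = (if y \<in> cbox (-a, -a) (a, a) then ?h y else 0)"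
      unfolding p y using gauss_factor[OF assms(1), of "p1 - y1" "p2 - y2"]
      by (auto simp: tensor_sq_def box_ind_def indicator_def cbox_Pair_eq)
  qed
  have "conv2 (gauss2 v) (tensor_sq (box_ind a)) p = integral (cbox (-a, -a) (a, a)) ?h"
    unfolding conv2_def eq by (rule integral_restrict_UNIV)
  also have "\<dots> = integral (cbox (-a) a) (\<lambda>x. integral (cbox (-a) a) (\<lambda>y. ?h (x, y)))"
    by (rule integral_prod_continuous) (intro continuous_intros)
  also have "\<dots> = integral (cbox (-a) a) (\<lambda>x. phi v (p1 - x) * gg a v p2)"
    unfolding gg_def box_real(2) fst_conv snd_conv by (simp only: integral_mult_right)
  also have "\<dots> = gg a v p1 * gg a v p2"
    unfolding box_real(2) by (simp only: integral_mult_left gg_def)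
  finally show ?thesis unfolding p by simp
qed

lemma grad_eq:
  assumes "(F has_derivative (\<lambda>h. G \<bullet> h)) (at (x::real\<times>real))"
  shows "grad F x = G"
proof -
  let ?P = "\<lambda>g. (F has_derivative (\<lambda>h. g \<bullet> h)) (at x)"
  have "?P (SOME g. ?P g)" by (rule someI[of ?P G]) (rule assms)
  then have "(\<lambda>h. (SOME g. ?P g) \<bullet> h) = (\<lambda>h. G \<bullet> h)"
    using assms by (rule has_derivative_unique)
  then have "(SOME g. ?P g) \<bullet> (1, 0) = G \<bullet> (1, 0)" "(SOME g. ?P g) \<bullet> (0, 1) = G \<bullet> (0, 1)"
    by (auto dest: fun_cong)
  then have "(SOME g. ?P g) = G" by (cases "SOME g. ?P g"; cases G) simp
  then show ?thesis unfolding grad_def .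
qed

lemma L6:
  assumes "v > 0" "a > 0"
  shows "grad (conv2 (gauss2 v) (tensor_sq (box_ind a))) (s, t) = (- DD a v s * gg a v t, - gg a v s * DD a v t)"
proof (rule grad_eq)
  have F: "conv2 (gauss2 v) (tensor_sq (box_ind a)) = (\<lambda>p. gg a v (fst p) * gg a v (snd p))"
    using L5[OF assms] by (rule ext)
  have dg: "(gg a v has_derivative (\<lambda>h. - DD a v x * h)) (at x)" for x
    using L4[OF assms, of x] by (rule has_field_derivative_imp_has_derivative)
  have f1: "(fst has_derivative fst) (at (s, t))" by (rule has_derivative_fst[OF has_derivative_ident])
  have f2: "(snd has_derivative snd) (at (s, t))" by (rule has_derivative_snd[OF has_derivative_ident])
  have d1: "((\<lambda>p::real\<times>real. gg a v (fst p)) has_derivative (\<lambda>h. - DD a v s * fst h)) (at (s, t))"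
    using has_derivative_compose[OF f1, of "gg a v"] dg[of s] by simp
  have d2: "((\<lambda>p::real\<times>real. gg a v (snd p)) has_derivative (\<lambda>h. - DD a v t * snd h)) (at (s, t))"
    using has_derivative_compose[OF f2, of "gg a v"] dg[of t] by simp
  have "((\<lambda>p::real\<times>real. gg a v (fst p) * gg a v (snd p)) has_derivative
      (\<lambda>h. gg a v s * (- DD a v t * snd h) + (- DD a v s * fst h) * gg a v t)) (at (s, t))"
    using has_derivative_mult[OF d1 d2] by simp
  moreover have "(\<lambda>h. gg a v s * (- DD a v t * snd h) + (- DD a v s * fst h) * gg a v t) =
      (\<lambda>h. (- DD a v s * gg a v t, - gg a v s * DD a v t) \<bullet> h)"
  proof (rule ext)
    fix h :: "real \<times> real"
    show "gg a v s * (- DD a v t * snd h) + (- DD a v s * fst h) * gg a v t =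
      (- DD a v s * gg a v t, - gg a v s * DD a v t) \<bullet> h"
      by (cases h) (simp add: inner_Pair algebra_simps)
  qed
  ultimately show "(conv2 (gauss2 v) (tensor_sq (box_ind a)) has_derivative
      (\<lambda>h. (- DD a v s * gg a v t, - gg a v s * DD a v t) \<bullet> h)) (at (s, t))"
    unfolding F by simp
qed

definition EE :: "real \<Rightarrow> real \<Rightarrow> real \<Rightarrow> real" where
  "EE v x y = exp (-(x^2 + y^2) / (2 * v)) / sqrt (2 * pi * v)"

lemma phi_diff:
  assumes "v > 0"
  shows "phi v (x - y) - phi v (x + y) = 2 * EE v x y * sinh (x * y / v)"
proof -
  have e1: "exp (-((x - y)^2) / (2 * v)) = exp (-(x^2 + y^2) / (2 * v)) * exp (x * y / v)"
    unfolding exp_add[symmetric] using assms by (simp add: field_simps power2_eq_square)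
  have e2: "exp (-((x + y)^2) / (2 * v)) = exp (-(x^2 + y^2) / (2 * v)) * exp (-(x * y / v))"
    unfolding exp_add[symmetric] using assms by (simp add: field_simps power2_eq_square)
  show ?thesis
    unfolding phi_def EE_def e1 e2 sinh_field_def using assms by (simp add: field_simps)
qed

lemma EE_pos: "v > 0 \<Longrightarrow> EE v x y > 0"
  unfolding EE_def by simp

lemma EE_swap:
  assumes "v > 0"
  shows "EE v s a * EE v t y = EE v t a * EE v s y"
proof -
  have "exp (-(s^2 + a^2) / (2 * v)) * exp (-(t^2 + y^2) / (2 * v)) =
        exp (-(t^2 + a^2) / (2 * v)) * exp (-(s^2 + y^2) / (2 * v))"
    unfolding exp_add[symmetric] using assms by (simp add: field_simps)
  then show ?thesis unfolding EE_def by (simp add: field_simps)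
qed

lemma alg1: "(y::real) * (Ds * p1 - Dt * p2) + (-y) * (Ds * p3 - Dt * p4) = y * (Ds * (p1 - p3) - Dt * (p2 - p4))"
  by (simp add: algebra_simps)

lemma alg2:
  fixes y v K1 K2 ss ty ta sy :: real
  assumes "v > 0"
  shows "y * ((2 * E1 * ss) * (2 * E2 * ty) - (2 * E3 * ta) * (2 * E4 * sy)) =
     (4 * v) * (y / v) * (E1 * E2 * ss * ty - E3 * E4 * ta * sy)"
  using assms by (simp add: field_simps)

lemma alg3: "(4 * v) * (y / v) * ((K::real) * ss * ty - K * ta * sy) = (4 * v * K) * ((y / v) * (ss * ty - ta * sy))"
  by (simp add: algebra_simps)

lemma pointwise:
  assumes "v > 0" "0 \<le> t" "t \<le> s" "\<bar>y\<bar> \<le> a"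
  shows "0 \<le> y * (DD a v s * phi v (t - y) - DD a v t * phi v (s - y))
            + (-y) * (DD a v s * phi v (t - - y) - DD a v t * phi v (s - - y))"
proof -
  have Ds: "DD a v s = 2 * EE v s a * sinh (s * a / v)" unfolding DD_def by (rule phi_diff[OF assms(1)])
  have Dt: "DD a v t = 2 * EE v t a * sinh (t * a / v)" unfolding DD_def by (rule phi_diff[OF assms(1)])
  have pt: "phi v (t - y) - phi v (t - - y) = 2 * EE v t y * sinh (t * y / v)"
    unfolding diff_minus_eq_add by (rule phi_diff[OF assms(1)])
  have ps: "phi v (s - y) - phi v (s - - y) = 2 * EE v s y * sinh (s * y / v)"
    unfolding diff_minus_eq_add by (rule phi_diff[OF assms(1)])
  have sw: "EE v t a * EE v s y = EE v s a * EE v t y" using EE_swap[OF assms(1)] by simp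
  let ?K = "EE v s a * EE v t y"
  have K: "?K > 0" using EE_pos[OF assms(1)] by simp
  have "\<bar>y / v\<bar> = \<bar>y\<bar> / v" by (simp only: abs_divide abs_of_pos[OF assms(1)])
  moreover have "\<bar>y\<bar> / v \<le> a / v" by (rule divide_right_mono[OF assms(4) less_imp_le[OF assms(1)]])
  ultimately have "\<bar>y / v\<bar> \<le> a / v" by (simp only:)
  then have H: "0 \<le> (y / v) * (sinh ((a / v) * s) * sinh ((y / v) * t) - sinh ((a / v) * t) * sinh ((y / v) * s))"
    by (rule hypD[OF assms(2) assms(3)])
  have ar: "s * a / v = (a / v) * s" "t * y / v = (y / v) * t" "t * a / v = (a / v) * t" "s * y / v = (y / v) * s"
    by simp_all
  have "y * (DD a v s * phi v (t - y) - DD a v t * phi v (s - y))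
            + (-y) * (DD a v s * phi v (t - - y) - DD a v t * phi v (s - - y))
      = (4 * v) * (y / v) * (EE v s a * EE v t y * sinh (s * a / v) * sinh (t * y / v) - EE v t a * EE v s y * sinh (t * a / v) * sinh (s * y / v))"
    unfolding alg1 pt ps Ds Dt by (rule alg2[OF assms(1)])
  also have "\<dots> = (4 * v * ?K) * ((y / v) * (sinh ((a / v) * s) * sinh ((y / v) * t) - sinh ((a / v) * t) * sinh ((y / v) * s)))"
    unfolding sw ar by (rule alg3)
  finally have eq: "y * (DD a v s * phi v (t - y) - DD a v t * phi v (s - y))
            + (-y) * (DD a v s * phi v (t - - y) - DD a v t * phi v (s - - y))
      = (4 * v * ?K) * ((y / v) * (sinh ((a / v) * s) * sinh ((y / v) * t) - sinh ((a / v) * t) * sinh ((y / v) * s)))" .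
  have "0 \<le> 4 * v * ?K" using K assms(1) by simp
  then show ?thesis unfolding eq using H by (rule mult_nonneg_nonneg)
qed

lemma int_nonneg_part:
  assumes "v > 0" "0 \<le> t" "t \<le> s" "a > 0"
  shows "0 \<le> integral {-a..a} (\<lambda>y. y * (DD a v s * phi v (t - y) - DD a v t * phi v (s - y)))"
proof -
  define P where "P = (\<lambda>y. y * (DD a v s * phi v (t - y) - DD a v t * phi v (s - y)))"
  have iP: "P integrable_on {-a..a}" unfolding P_def
    by (intro integrable_continuous_interval continuous_intros)
  have iPm: "(\<lambda>y. P (-y)) integrable_on {-a..a}" unfolding P_def
    by (intro integrable_continuous_interval continuous_intros)
  have r: "integral {-a..a} (\<lambda>y. P (-y)) = integral {-a..a} P"
    using Henstock_Kurzweil_Integration.integral_reflect_real[of a "-a" P] by simp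
  have "integral {-a..a} (\<lambda>y. P y + P (-y)) = integral {-a..a} P + integral {-a..a} (\<lambda>y. P (-y))"
    by (rule integral_add[OF iP iPm])
  also have "\<dots> = 2 * integral {-a..a} P" using r by simp
  finally have e: "integral {-a..a} (\<lambda>y. P y + P (-y)) = 2 * integral {-a..a} P" .
  have "0 \<le> integral {-a..a} (\<lambda>y. P y + P (-y))"
  proof (rule integral_nonneg)
    show "(\<lambda>y. P y + P (-y)) integrable_on {-a..a}" by (rule integrable_add[OF iP iPm])
    fix y assume "y \<in> {-a..a}"
    then have "\<bar>y\<bar> \<le> a" by auto
    from pointwise[OF assms(1-3) this] show "0 \<le> P y + P (-y)" unfolding P_def .
  qed
  then have "0 \<le> 2 * integral {-a..a} P" by (simp only: e)
  then have "0 \<le> integral {-a..a} P" by simp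
  then show ?thesis by (simp only: P_def)
qed

theorem mainTheorem12:
  fixes \<alpha> \<sigma> s t :: real
  assumes "\<alpha> > 0" and "\<sigma> > 0" and "\<sigma>^2 \<le> \<alpha>^2 / 24"
    and "0 \<le> t" and "t \<le> s"
  shows "Cfun \<alpha> \<sigma> (s, t) \<ge> 0"
proof -
  define v where "v = \<sigma>^2"
  have v: "v > 0" unfolding v_def using assms(2) by simp
  let ?D = "DD \<alpha> v" and ?g = "gg \<alpha> v" and ?M = "MM \<alpha> v"
  have "Cfun \<alpha> \<sigma> (s, t) = (- ?D s * ?g t, - ?g s * ?D t) \<bullet> (- t, s)"
    unfolding Cfun_def v_def[symmetric] L6[OF v assms(1)] rot90_def by simp
  also have "\<dots> = ?D s * (t * ?g t) - ?D t * (s * ?g s)"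
    by (simp add: inner_Pair algebra_simps)
  also have "\<dots> = ?D s * ?M t - ?D t * ?M s"
    unfolding L3[OF v assms(1)] by (simp add: algebra_simps)
  also have "\<dots> = integral {-\<alpha>..\<alpha>} (\<lambda>y. y * (?D s * phi v (t - y) - ?D t * phi v (s - y)))"
  proof -
    have "((\<lambda>y. ?D s * (y * phi v (t - y)) - ?D t * (y * phi v (s - y))) has_integral
        (?D s * ?M t - ?D t * ?M s)) {-\<alpha>..\<alpha>}"
      unfolding MM_def by (intro has_integral_diff has_integral_mult_right integrable_integral int_yphi)
    moreover have "(\<lambda>y. ?D s * (y * phi v (t - y)) - ?D t * (y * phi v (s - y))) =
        (\<lambda>y. y * (?D s * phi v (t - y) - ?D t * phi v (s - y)))"
      by (rule ext) (simp only: algebra_simps)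
    ultimately show ?thesis by (metis integral_unique)
  qed
  also have "\<dots> \<ge> 0" by (rule int_nonneg_part[OF v assms(4) assms(5) assms(1)])
  finally show ?thesis .
qed

end
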